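(* Let $s\in\mathbb{R}$ be Gaussian distributed with variance $\sigma^2$ (arbitrary mean). Let $t\in\mathbb{R}$, $p\in(0,1/e]$, $L=8\sigma^{-1}\sqrt{\ln p^{-1}}$, and $0\le\varepsilon\le 1/L$. If $\Pr[s\ge t-\varepsilon]\ge p$ and $\Pr[s\le t]\ge p$, then \[ \Pr[s\ge t-\varepsilon\mid s\le t]\le e^3\varepsilon L\cdot\Pr[s\ge t]. \] *)

theory Defs
  imports "HOL-Probability.Probability"
begin

end

theory Submission
  imports Defs
begin

lemma snd_prob_eq:
  assumes P: "prob_space M" and D: "distributed M lborel Z std_normal_density"
    and S: "S \<in> sets borel"
  shows "ennreal (measure M {\<omega>\<in>space M. Z \<omega> \<in> S}) = (\<integral>\<^sup>+x. ennreal (std_normal_density x) * indicator S x \<partial>lborel)"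
proof -
  have "{\<omega>\<in>space M. Z \<omega> \<in> S} = Z -` S \<inter> space M" by auto
  moreover have "emeasure M (Z -` S \<inter> space M) = (\<integral>\<^sup>+x. ennreal (std_normal_density x) * indicator S x \<partial>lborel)"
    using distributed_emeasure[OF D] S by simp
  ultimately show ?thesis using finite_measure.emeasure_eq_measure[OF prob_space.finite_measure[OF P]] by metis
qed

lemma snd_ub:
  assumes P: "prob_space M" and D: "distributed M lborel Z std_normal_density"
    and ab: "a \<le> b" and K: "\<And>u. a \<le> u \<Longrightarrow> u \<le> b \<Longrightarrow> std_normal_density u \<le> K"
  shows "measure M {\<omega>\<in>space M. Z \<omega> \<in> {a..b}} \<le> (b - a) * K"
proof -
  have K0: "0 \<le> K" using K[of a] ab normal_density_nonneg[of 0 1 a] by linarith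
  have "ennreal (measure M {\<omega>\<in>space M. Z \<omega> \<in> {a..b}}) = (\<integral>\<^sup>+x. ennreal (std_normal_density x) * indicator {a..b} x \<partial>lborel)"
    by (rule snd_prob_eq[OF P D]) simp
  also have "\<dots> \<le> (\<integral>\<^sup>+x. ennreal K * indicator {a..b} x \<partial>lborel)"
    by (intro nn_integral_mono) (auto simp: indicator_def K intro!: ennreal_leI)
  also have "\<dots> = ennreal K * ennreal (b - a)"
    using ab by (subst nn_integral_cmult_indicator) auto
  also have "\<dots> = ennreal ((b - a) * K)" using K0 ab by (simp add: ennreal_mult' mult.commute)
  finally show ?thesis using K0 ab by (simp add: ennreal_le_iff)
qed

lemma snd_lb:
  assumes P: "prob_space M" and D: "distributed M lborel Z std_normal_density"
    and ab: "a \<le> b" and K0: "0 \<le> K" and K: "\<And>u. a \<le> u \<Longrightarrow> u \<le> b \<Longrightarrow> K \<le> std_normal_density u"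
  shows "(b - a) * K \<le> measure M {\<omega>\<in>space M. Z \<omega> \<in> {a..b}}"
proof -
  have "ennreal ((b - a) * K) = ennreal K * ennreal (b - a)" using K0 ab by (simp add: ennreal_mult' mult.commute)
  also have "\<dots> = (\<integral>\<^sup>+x. ennreal K * indicator {a..b} x \<partial>lborel)"
    using ab by (subst nn_integral_cmult_indicator) auto
  also have "\<dots> \<le> (\<integral>\<^sup>+x. ennreal (std_normal_density x) * indicator {a..b} x \<partial>lborel)"
    by (intro nn_integral_mono) (auto simp: indicator_def K intro!: ennreal_leI)
  also have "\<dots> = ennreal (measure M {\<omega>\<in>space M. Z \<omega> \<in> {a..b}})"
    by (rule snd_prob_eq[OF P D, symmetric]) simp
  finally show ?thesis by (simp add: ennreal_le_iff)
qed

lemma nd2_int: "(\<integral>\<^sup>+x. ennreal (normal_density 0 (sqrt 2) x) \<partial>lborel) = 1"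
  by (simp add: nn_integral_eq_integral)

lemma snd_tail_gen:
  assumes P: "prob_space M" and D: "distributed M lborel Z std_normal_density"
    and S: "S \<in> sets borel" and y: "\<And>u. u \<in> S \<Longrightarrow> y\<^sup>2 \<le> u\<^sup>2"
  shows "measure M {\<omega>\<in>space M. Z \<omega> \<in> S} \<le> sqrt 2 * exp (- y\<^sup>2 / 4)"
proof -
  have pw: "std_normal_density u \<le> sqrt 2 * exp (- y\<^sup>2 / 4) * normal_density 0 (sqrt 2) u" if "u \<in> S" for u
  proof -
    have "exp (- u\<^sup>2 / 2) = exp (- u\<^sup>2 / 4) * exp (- u\<^sup>2 / 4)" by (simp flip: exp_add)
    also have "\<dots> \<le> exp (- y\<^sup>2 / 4) * exp (- u\<^sup>2 / 4)" using y[OF that] by (intro mult_right_mono) auto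
    finally have e: "exp (- u\<^sup>2 / 2) \<le> exp (- y\<^sup>2 / 4) * exp (- u\<^sup>2 / 4)" .
    have "sqrt 2 * exp (- y\<^sup>2 / 4) * normal_density 0 (sqrt 2) u = exp (- y\<^sup>2 / 4) * exp (- u\<^sup>2 / 4) / sqrt (2*pi)"
      using real_sqrt_mult_self[of 2] by (simp add: normal_density_def real_sqrt_mult field_simps)
    moreover have "std_normal_density u = exp (- u\<^sup>2 / 2) / sqrt (2*pi)" by (simp add: std_normal_density_def)
    ultimately show ?thesis using e by (simp add: divide_right_mono)
  qed
  have "ennreal (measure M {\<omega>\<in>space M. Z \<omega> \<in> S}) = (\<integral>\<^sup>+x. ennreal (std_normal_density x) * indicator S x \<partial>lborel)"
    by (rule snd_prob_eq[OF P D S])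
  also have "\<dots> \<le> (\<integral>\<^sup>+x. ennreal (sqrt 2 * exp (- y\<^sup>2 / 4)) * ennreal (normal_density 0 (sqrt 2) x) \<partial>lborel)"
    by (intro nn_integral_mono) (use pw in \<open>auto simp: indicator_def ennreal_mult'[symmetric] intro!: ennreal_leI\<close>)
  also have "\<dots> = ennreal (sqrt 2 * exp (- y\<^sup>2 / 4))"
    by (subst nn_integral_cmult) (auto simp: nd2_int)
  finally show ?thesis by (simp add: ennreal_le_iff)
qed

lemma phi_upper:
  assumes "x\<^sup>2 - k \<le> u\<^sup>2"
  shows "std_normal_density u \<le> exp (k/2) * std_normal_density x"
proof -
  have "exp (- u\<^sup>2 / 2) \<le> exp (k/2 + - x\<^sup>2 / 2)" using assms by simp
  then have "exp (- u\<^sup>2 / 2) \<le> exp (k/2) * exp (- x\<^sup>2 / 2)" by (simp only: exp_add[symmetric])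
  then show ?thesis unfolding std_normal_density_def
    by (simp add: divide_right_mono)
qed

lemma phi_lower:
  assumes "u\<^sup>2 \<le> x\<^sup>2 + k"
  shows "exp (- k/2) * std_normal_density x \<le> std_normal_density u"
proof -
  have "exp (- k/2 + - x\<^sup>2 / 2) \<le> exp (- u\<^sup>2 / 2)" using assms by simp
  then have "exp (- k/2) * exp (- x\<^sup>2 / 2) \<le> exp (- u\<^sup>2 / 2)" by (simp only: exp_add[symmetric])
  then show ?thesis unfolding std_normal_density_def
    by (simp add: divide_right_mono)
qed

lemma tail_to_bound:
  assumes p: "0 < p" "p \<le> sqrt 2 * exp (- y\<^sup>2 / 4)" and l: "l\<^sup>2 = ln (1/p)" "1 \<le> l"
  shows "\<bar>y\<bar> \<le> 3 * l"
proof -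
  have "p * exp (y\<^sup>2/4) \<le> sqrt 2 * exp (- y\<^sup>2 / 4) * exp (y\<^sup>2/4)"
    using p by (intro mult_right_mono) auto
  also have "\<dots> = sqrt 2" by (simp flip: exp_add)
  also have "sqrt 2 \<le> exp (1/2)"
  proof -
    have "exp (1/2::real) * exp (1/2) = exp 1" by (simp flip: exp_add)
    moreover have "2 \<le> exp (1::real)" using exp_ge_add_one_self[of 1] by simp
    ultimately have "sqrt 2 \<le> sqrt (exp (1/2) * exp (1/2::real))" by simp
    then show ?thesis by simp
  qed
  finally have "exp (y\<^sup>2/4) \<le> exp (1/2) * (1/p)" using p by (simp add: field_simps)
  also have "1/p = exp (l\<^sup>2)" using l p by simp
  finally have "exp (y\<^sup>2/4) \<le> exp (1/2 + l\<^sup>2)" by (simp add: exp_add)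
  then have "y\<^sup>2 \<le> 2 + 4 * l\<^sup>2" by simp
  also have "\<dots> \<le> (3*l)\<^sup>2" using l(2) mult_mono[of 1 l 1 l] by (simp add: power2_eq_square)
  finally have "sqrt (y\<^sup>2) \<le> sqrt ((3*l)\<^sup>2)" by (rule real_sqrt_le_mono)
  then show ?thesis using l(2) by (simp only: real_sqrt_abs)
qed

lemma sqrt2pi: "sqrt (2*pi) \<le> 29/10"
proof -
  have "sqrt (2*pi) \<le> sqrt ((29/10)\<^sup>2)" using pi_less_4 by (intro real_sqrt_le_mono) (simp add: power2_eq_square)
  then show ?thesis by simp
qed

lemma phi0: "std_normal_density 0 = 1 / sqrt (2*pi)"
  by (simp add: std_normal_density_def)

lemma core:
  assumes P: "prob_space M" and D: "distributed M lborel Z std_normal_density"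
    and p: "0 < p" "p \<le> exp (-1)" and l: "l = sqrt (ln (1/p))"
    and dl: "0 \<le> \<delta>" "8 * l * \<delta> \<le> 1"
    and hD: "p \<le> measure M {\<omega>\<in>space M. Z \<omega> \<in> {x-\<delta>..}}"
    and hB: "p \<le> measure M {\<omega>\<in>space M. Z \<omega> \<in> {..x}}"
  shows "measure M {\<omega>\<in>space M. Z \<omega> \<in> {x-\<delta>..x}} \<le>
    measure M {\<omega>\<in>space M. Z \<omega> \<in> {..x}} * (exp 3 * (8 * l * \<delta>) * measure M {\<omega>\<in>space M. Z \<omega> \<in> {x..}})"
proof -
  define Pr where "Pr S = measure M {\<omega>\<in>space M. Z \<omega> \<in> S}" for S
  interpret prob_space M by (rule P)
  have Zm: "Z \<in> borel_measurable M" using D by (simp add: distributed_def)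
  have mono: "Pr S \<le> Pr T" if "S \<subseteq> T" "S \<in> sets borel" "T \<in> sets borel" for S T
    unfolding Pr_def using that Zm by (intro finite_measure_mono) (auto)
  have lnp: "1 \<le> ln (1/p)"
  proof -
    have "ln p \<le> ln (exp (-1))" using p by (subst ln_le_cancel_iff) auto
    then show ?thesis using p by (simp add: ln_div)
  qed
  have l1: "1 \<le> l" using lnp l by simp
  have l2: "l\<^sup>2 = ln (1/p)" using lnp l by simp
  have d8: "\<delta> \<le> 1/8" using dl l1 mult_right_mono[of 1 l \<delta>] by simp
  have A: "0 \<le> Pr {x-\<delta>..x}" "0 \<le> Pr {..x}" "0 \<le> Pr {x..}" unfolding Pr_def by auto
  have sq: "sqrt (2*pi) \<le> 29/10" by (rule sqrt2pi)
  have e1: "2 \<le> exp (1::real)" using exp_ge_add_one_self[of 1] by simp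
  have eh: "3/2 \<le> exp (1/2::real)" using exp_ge_add_one_self[of "1/2"] by simp
  show ?thesis
  proof (cases "x \<le> 0")
    case True
    have tB: "Pr {..x} \<le> sqrt 2 * exp (- x\<^sup>2 / 4)"
      unfolding Pr_def
    proof (rule snd_tail_gen[OF P D])
      fix u assume "u \<in> {..x}"
      then have "0 \<le> -x" "-x \<le> -u" using True by auto
      then have "(-x)\<^sup>2 \<le> (-u)\<^sup>2" by (intro power_mono) auto
      then show "x\<^sup>2 \<le> u\<^sup>2" by simp
    qed simp
    have xb: "\<bar>x\<bar> \<le> 3 * l"
      using tail_to_bound[OF p(1) order.trans[OF hB[folded Pr_def] tB] l2 l1] .
    have hA: "Pr {x-\<delta>..x} \<le> (x - (x - \<delta>)) * std_normal_density x"
      unfolding Pr_def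
    proof (rule snd_ub[OF P D])
      fix u assume u: "x - \<delta> \<le> u" "u \<le> x"
      then have "0 \<le> -x" "-x \<le> -u" using True by auto
      then have "(-x)\<^sup>2 \<le> (-u)\<^sup>2" by (intro power_mono) auto
      then have "x\<^sup>2 - 0 \<le> u\<^sup>2" by simp
      from phi_upper[OF this] show "std_normal_density u \<le> std_normal_density x" by simp
    qed (use dl in simp)
    define h where "h = 1 / (1 - x)"
    have h0: "0 < h" "h \<le> 1" "h * (-x) \<le> 1" using True by (auto simp: h_def field_simps)
    have hB2: "(x - (x - h)) * (exp (- 3/2) * std_normal_density x) \<le> Pr {x-h..x}"
      unfolding Pr_def
    proof (rule snd_lb[OF P D])
      fix u assume u: "x - h \<le> u" "u \<le> x"
      then have "0 \<le> -u" "-u \<le> h - x" using True by auto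
      then have "(-u)\<^sup>2 \<le> (h - x)\<^sup>2" by (intro power_mono) auto
      also have "(h - x)\<^sup>2 = h * h + 2 * (h * (-x)) + x\<^sup>2" by (simp add: power2_eq_square algebra_simps)
      also have "\<dots> \<le> x\<^sup>2 + 3" using h0 mult_le_one[of h h] by simp
      finally have "u\<^sup>2 \<le> x\<^sup>2 + 3" by simp
      from phi_lower[OF this] show "exp (- 3/2) * std_normal_density x \<le> std_normal_density u" by simp
    qed (use h0 in auto)
    have hB3: "Pr {x-h..x} \<le> Pr {..x}" by (rule mono) auto
    have hC: "(1 - 0) * (exp (- 1/2) * std_normal_density 0) \<le> Pr {0..1}"
      unfolding Pr_def
    proof (rule snd_lb[OF P D])
      fix u :: real assume u: "0 \<le> u" "u \<le> 1"
      then have "u\<^sup>2 \<le> 0\<^sup>2 + 1" by (simp add: power_le_one)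
      from phi_lower[OF this] show "exp (- 1/2) * std_normal_density 0 \<le> std_normal_density u" by simp
    qed auto
    have hC2: "Pr {0..1} \<le> Pr {x..}" by (rule mono) (use True in auto)
    define \<phi> where "\<phi> = std_normal_density x"
    have \<phi>0: "0 \<le> \<phi>" unfolding \<phi>_def by simp
    have ex: "exp (3/2) * exp (- 3/2) = (1::real)" "exp (1/2) * exp (- 1/2) = (1::real)"
      by (simp_all flip: exp_add)
    have s1: "\<phi> \<le> Pr {..x} * (exp (3/2) * (1 - x))"
    proof -
      have "\<phi> = ((1 - x) * exp (3/2)) * (h * (exp (- 3/2) * \<phi>))"
        using True ex(1) by (simp add: h_def field_simps)
      also have "\<dots> \<le> ((1 - x) * exp (3/2)) * Pr {..x}"
        using hB2 hB3 True by (intro mult_left_mono) (auto simp: \<phi>_def)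
      finally show ?thesis by (simp add: ac_simps)
    qed
    have s2: "1 \<le> Pr {x..} * (exp (1/2) * sqrt (2*pi))"
    proof -
      have "1 = (exp (1/2) * sqrt (2*pi)) * (exp (- 1/2) * std_normal_density 0)"
        using ex(2) by (simp add: phi0 field_simps)
      also have "\<dots> \<le> (exp (1/2) * sqrt (2*pi)) * Pr {x..}"
        using hC hC2 by (intro mult_left_mono) auto
      finally show ?thesis by (simp add: ac_simps)
    qed
    have "Pr {x-\<delta>..x} \<le> \<delta> * \<phi>" using hA by (simp add: \<phi>_def)
    also have "\<dots> \<le> \<delta> * (Pr {..x} * (exp (3/2) * (4 * l)))"
    proof -
      have "Pr {..x} * (exp (3/2) * (1 - x)) \<le> Pr {..x} * (exp (3/2) * (4 * l))"
        using xb l1 A by (intro mult_left_mono) auto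
      then show ?thesis using s1 dl by (intro mult_left_mono) auto
    qed
    also have "\<dots> \<le> \<delta> * (Pr {..x} * (exp (3/2) * (4 * l))) * (Pr {x..} * (exp (1/2) * sqrt (2*pi)))"
      using mult_left_mono[OF s2, of "\<delta> * (Pr {..x} * (exp (3/2) * (4 * l)))"] dl A l1 by simp
    also have "\<dots> = Pr {..x} * Pr {x..} * \<delta> * l * (4 * (exp (3/2) * exp (1/2)) * sqrt (2*pi))"
      by (simp add: ac_simps)
    also have "\<dots> \<le> Pr {..x} * Pr {x..} * \<delta> * l * (8 * exp 3)"
    proof -
      have "exp (3/2) * exp (1/2) = exp (2::real)" by (simp flip: exp_add)
      moreover have "exp (3::real) = exp 2 * exp 1" by (simp flip: exp_add)
      moreover have "4 * exp 2 * sqrt (2*pi) \<le> 4 * exp 2 * (2 * exp (1::real))"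
        using sq e1 by (intro mult_left_mono) auto
      ultimately show ?thesis using A dl l1
        by (intro mult_left_mono mult_nonneg_nonneg) (auto simp: ac_simps)
    qed
    finally show ?thesis unfolding Pr_def by (simp add: ac_simps)
  next
    case False
    then have x0: "0 < x" by simp
    have xb: "x \<le> 3 * l + \<delta>"
    proof (cases "0 \<le> x - \<delta>")
      case True
      have tD: "Pr {x-\<delta>..} \<le> sqrt 2 * exp (- (x-\<delta>)\<^sup>2 / 4)"
        unfolding Pr_def
      proof (rule snd_tail_gen[OF P D])
        fix u assume "u \<in> {x-\<delta>..}"
        then have "x - \<delta> \<le> u" by auto
        then show "(x-\<delta>)\<^sup>2 \<le> u\<^sup>2" using True by (intro power_mono) auto
      qed simp
      have "\<bar>x-\<delta>\<bar> \<le> 3 * l"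
        using tail_to_bound[OF p(1) order.trans[OF hD[folded Pr_def] tD] l2 l1] .
      then show ?thesis by simp
    next
      case False
      then show ?thesis using l1 dl by simp
    qed
    have xd: "x * \<delta> \<le> 1/2"
    proof -
      have "x * \<delta> \<le> (3 * l + \<delta>) * \<delta>" using xb dl by (intro mult_right_mono) auto
      also have "\<dots> = 3/8 * (8 * l * \<delta>) + \<delta> * \<delta>" by (simp add: algebra_simps)
      also have "\<dots> \<le> 3/8 * 1 + (1/8) * (1/8)"
        using dl d8 by (intro add_mono mult_left_mono mult_mono) auto
      finally show ?thesis by simp
    qed
    define \<phi> where "\<phi> = std_normal_density x"
    have \<phi>0: "0 \<le> \<phi>" unfolding \<phi>_def by simp
    have hA: "Pr {x-\<delta>..x} \<le> (x - (x - \<delta>)) * (exp (2 * x * \<delta> / 2) * \<phi>)"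
      unfolding Pr_def
    proof (rule snd_ub[OF P D])
      fix u assume u: "x - \<delta> \<le> u" "u \<le> x"
      have "x\<^sup>2 - 2 * x * \<delta> \<le> u\<^sup>2"
      proof (cases "0 \<le> x - \<delta>")
        case True
        then have "(x-\<delta>)\<^sup>2 \<le> u\<^sup>2" using u by (intro power_mono) auto
        moreover have "(x-\<delta>)\<^sup>2 = x\<^sup>2 - 2 * x * \<delta> + \<delta>\<^sup>2" by (simp add: power2_eq_square algebra_simps)
        moreover have "0 \<le> \<delta>\<^sup>2" by simp
        ultimately show ?thesis by linarith
      next
        case False
        have "x\<^sup>2 - 2 * x * \<delta> = x * (x - 2 * \<delta>)" by (simp add: power2_eq_square algebra_simps)
        also have "\<dots> \<le> 0" using x0 False dl by (intro mult_nonneg_nonpos) auto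
        finally show ?thesis using zero_le_power2[of u] by linarith
      qed
      from phi_upper[OF this] show "std_normal_density u \<le> exp (2 * x * \<delta> / 2) * \<phi>" by (simp add: \<phi>_def)
    qed (use dl in simp)
    define h where "h = 1 / (1 + x)"
    have h0: "0 < h" "h \<le> 1" "h * x \<le> 1" using x0 by (auto simp: h_def field_simps)
    have hC: "(x + h - x) * (exp (- 3/2) * \<phi>) \<le> Pr {x..x+h}"
      unfolding Pr_def
    proof (rule snd_lb[OF P D])
      fix u assume u: "x \<le> u" "u \<le> x + h"
      then have "u\<^sup>2 \<le> (x + h)\<^sup>2" using x0 by (intro power_mono) auto
      also have "(x + h)\<^sup>2 = h * h + 2 * (h * x) + x\<^sup>2" by (simp add: power2_eq_square algebra_simps)
      also have "\<dots> \<le> x\<^sup>2 + 3" using h0 mult_le_one[of h h] by simp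
      finally have "u\<^sup>2 \<le> x\<^sup>2 + 3" .
      from phi_lower[OF this] show "exp (- 3/2) * \<phi> \<le> std_normal_density u" by (simp add: \<phi>_def)
    qed (use h0 \<phi>0 in auto)
    have hC3: "Pr {x..x+h} \<le> Pr {x..}" by (rule mono) auto
    have hB1: "(0 - (-1)) * (exp (- 1/2) * std_normal_density 0) \<le> Pr {-1..0}"
      unfolding Pr_def
    proof (rule snd_lb[OF P D])
      fix u :: real assume u: "-1 \<le> u" "u \<le> 0"
      then have "(-u)\<^sup>2 \<le> 1" by (intro power_le_one) auto
      then have "u\<^sup>2 \<le> 0\<^sup>2 + 1" by simp
      from phi_lower[OF this] show "exp (- 1/2) * std_normal_density 0 \<le> std_normal_density u" by simp
    qed auto
    have hB2: "Pr {-1..0} \<le> Pr {..x}" by (rule mono) (use x0 in auto)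
    have ex: "exp (3/2) * exp (- 3/2) = (1::real)" "exp (1/2) * exp (- 1/2) = (1::real)"
      by (simp_all flip: exp_add)
    have s1: "\<phi> \<le> Pr {x..} * (exp (3/2) * (1 + x))"
    proof -
      have "\<phi> = ((1 + x) * exp (3/2)) * (h * (exp (- 3/2) * \<phi>))"
        using x0 ex(1) by (simp add: h_def field_simps)
      also have "\<dots> \<le> ((1 + x) * exp (3/2)) * Pr {x..}"
        using hC hC3 x0 by (intro mult_left_mono) auto
      finally show ?thesis by (simp add: ac_simps)
    qed
    have s2: "1 \<le> Pr {..x} * (exp (1/2) * sqrt (2*pi))"
    proof -
      have "1 = (exp (1/2) * sqrt (2*pi)) * (exp (- 1/2) * std_normal_density 0)"
        using ex(2) by (simp add: phi0 field_simps)
      also have "\<dots> \<le> (exp (1/2) * sqrt (2*pi)) * Pr {..x}"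
        using hB1 hB2 by (intro mult_left_mono) auto
      finally show ?thesis by (simp add: ac_simps)
    qed
    have "Pr {x-\<delta>..x} \<le> \<delta> * (exp (x * \<delta>) * \<phi>)" using hA by simp
    also have "\<dots> \<le> \<delta> * (exp (1/2) * \<phi>)"
      using xd dl \<phi>0 by (intro mult_left_mono mult_right_mono) auto
    also have "\<dots> \<le> \<delta> * (exp (1/2) * (Pr {x..} * (exp (3/2) * (33/8 * l))))"
    proof -
      have "1 + x \<le> 33/8 * l" using xb d8 l1 by simp
      then have "Pr {x..} * (exp (3/2) * (1 + x)) \<le> Pr {x..} * (exp (3/2) * (33/8 * l))"
        using A by (intro mult_left_mono) auto
      then show ?thesis using s1 dl by (intro mult_left_mono) auto
    qed
    also have "\<dots> \<le> \<delta> * (exp (1/2) * (Pr {x..} * (exp (3/2) * (33/8 * l)))) * (Pr {..x} * (exp (1/2) * sqrt (2*pi)))"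
      using mult_left_mono[OF s2, of "\<delta> * (exp (1/2) * (Pr {x..} * (exp (3/2) * (33/8 * l))))"] dl A l1 by simp
    also have "\<dots> = Pr {..x} * Pr {x..} * \<delta> * l * (33/8 * (exp (1/2) * exp (3/2) * exp (1/2)) * sqrt (2*pi))"
      by (simp add: ac_simps)
    also have "\<dots> \<le> Pr {..x} * Pr {x..} * \<delta> * l * (8 * exp 3)"
    proof -
      have "exp (1/2) * exp (3/2) * exp (1/2) = exp (5/2::real)" by (simp flip: exp_add)
      moreover have "exp (3::real) = exp (5/2) * exp (1/2)" by (simp flip: exp_add)
      moreover have "33/8 * exp (5/2) * sqrt (2*pi) \<le> exp (5/2) * (8 * exp (1/2::real))"
      proof -
        have "33/8 * sqrt (2*pi) \<le> 8 * exp (1/2::real)" using sq eh by simp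
        then show ?thesis by (simp add: algebra_simps)
      qed
      ultimately show ?thesis using A dl l1
        by (intro mult_left_mono mult_nonneg_nonneg) (auto simp: ac_simps)
    qed
    finally show ?thesis unfolding Pr_def by (simp add: ac_simps)
  qed
qed

theorem lemma4p8:
  fixes M :: "'a measure" and s :: "'a \<Rightarrow> real"
    and \<mu> \<sigma> t p L \<epsilon> :: real
  assumes "prob_space M"
    and "\<sigma> > 0"
    and "distributed M lborel s (normal_density \<mu> \<sigma>)"
    and "0 < p" and "p \<le> exp (-1)"
    and "L = 8 / \<sigma> * sqrt (ln (1 / p))"
    and "0 \<le> \<epsilon>" and "\<epsilon> \<le> 1 / L"
    and "\<P>(\<omega> in M. s \<omega> \<ge> t - \<epsilon>) \<ge> p"
    and "\<P>(\<omega> in M. s \<omega> \<le> t) \<ge> p"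
  shows "\<P>(\<omega> in M. s \<omega> \<ge> t - \<epsilon> \<bar> s \<omega> \<le> t)
           \<le> exp 3 * \<epsilon> * L * \<P>(\<omega> in M. s \<omega> \<ge> t)"
proof -
  note P = assms(1) and sg = assms(2)
  define Z where "Z \<omega> = (s \<omega> - \<mu>) / \<sigma>" for \<omega>
  define x where "x = (t - \<mu>) / \<sigma>"
  define \<delta> where "\<delta> = \<epsilon> / \<sigma>"
  define l where "l = sqrt (ln (1 / p))"
  have D: "distributed M lborel Z std_normal_density"
    using prob_space.normal_standard_normal_convert[OF P sg, of s \<mu>] assms(3)
    by (simp add: Z_def[abs_def])
  have lpos: "0 < l"
  proof -
    have "exp (-1::real) < 1" by simp
    then have "p < 1" using assms(5) by linarith
    then have "1 < 1 / p" using assms(4) by (simp add: field_simps)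
    then have "0 < ln (1/p)" by (intro ln_gt_zero)
    then show ?thesis by (simp add: l_def)
  qed
  have Lpos: "0 < L" using assms(6) lpos sg by (simp add: l_def)
  have eL: "\<epsilon> * L = 8 * l * \<delta>" using assms(6) sg by (simp add: l_def \<delta>_def)
  have dl: "0 \<le> \<delta>" "8 * l * \<delta> \<le> 1"
    using assms(7) sg apply (simp add: \<delta>_def)
    using assms(8) Lpos eL by (simp add: field_simps)
  have xd: "x - \<delta> = (t - \<epsilon> - \<mu>) / \<sigma>" by (simp add: x_def \<delta>_def diff_divide_distrib)
  have k1: "(x - \<delta> \<le> (v - \<mu>) / \<sigma>) = (t - \<epsilon> \<le> v)" for v
    using sg by (simp add: xd divide_le_cancel)
  have k2: "((v - \<mu>) / \<sigma> \<le> x) = (v \<le> t)" for v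
    using sg by (simp add: x_def divide_le_cancel)
  have k3: "(x \<le> (v - \<mu>) / \<sigma>) = (t \<le> v)" for v
    using sg by (simp add: x_def divide_le_cancel)
  have ev1: "{\<omega>\<in>space M. s \<omega> \<ge> t - \<epsilon>} = {\<omega>\<in>space M. Z \<omega> \<in> {x-\<delta>..}}"
    using sg by (auto simp: Z_def k1 k2 k3)
  have ev2: "{\<omega>\<in>space M. s \<omega> \<le> t} = {\<omega>\<in>space M. Z \<omega> \<in> {..x}}"
    using sg by (auto simp: Z_def k1 k2 k3)
  have ev3: "{\<omega>\<in>space M. s \<omega> \<ge> t} = {\<omega>\<in>space M. Z \<omega> \<in> {x..}}"
    using sg by (auto simp: Z_def k1 k2 k3)
  have ev4: "{\<omega>\<in>space M. s \<omega> \<ge> t - \<epsilon> \<and> s \<omega> \<le> t} = {\<omega>\<in>space M. Z \<omega> \<in> {x-\<delta>..x}}"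
    using sg by (auto simp: Z_def k1 k2 k3)
  have hD: "p \<le> measure M {\<omega>\<in>space M. Z \<omega> \<in> {x-\<delta>..}}" using assms(9) ev1 by simp
  have hB: "p \<le> measure M {\<omega>\<in>space M. Z \<omega> \<in> {..x}}" using assms(10) ev2 by simp
  have c: "measure M {\<omega>\<in>space M. Z \<omega> \<in> {x-\<delta>..x}} \<le>
    measure M {\<omega>\<in>space M. Z \<omega> \<in> {..x}} * (exp 3 * (8 * l * \<delta>) * measure M {\<omega>\<in>space M. Z \<omega> \<in> {x..}})"
    by (rule core[OF P D assms(4,5) l_def dl hD hB])
  have Bpos: "0 < measure M {\<omega>\<in>space M. Z \<omega> \<in> {..x}}" using hB assms(4) by linarith
  have "\<P>(\<omega> in M. s \<omega> \<ge> t - \<epsilon> \<bar> s \<omega> \<le> t) =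
     measure M {\<omega>\<in>space M. Z \<omega> \<in> {x-\<delta>..x}} / measure M {\<omega>\<in>space M. Z \<omega> \<in> {..x}}"
    unfolding cond_prob_def using ev2 ev4 by simp
  also have "\<dots> \<le> exp 3 * (8 * l * \<delta>) * measure M {\<omega>\<in>space M. Z \<omega> \<in> {x..}}"
    using c Bpos by (simp add: pos_divide_le_eq ac_simps)
  also have "\<dots> = exp 3 * \<epsilon> * L * \<P>(\<omega> in M. s \<omega> \<ge> t)"
    using ev3 eL by (simp add: ac_simps)
  finally show ?thesis .
qed

end
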